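(* Let $\mathcal{D}$ be a finite dataset of formulae in $\mathcal{L}^k_{\mathtt{CNF}}(n,m)$. For every $\epsilon>0$ there exists $F\in\mathcal{F}^{n,m}_{\mathtt{RNIGNN}}$ such that for all $\phi\in\mathcal{D}$, $\Pr\big(\mathbb{I}^{n,m}_{\mathtt{SAT}}(F,\phi)\neq\Phi^{n,m}_{\mathtt{sat}}(\phi)\big)<\epsilon$.
   Context: $k$-CNF formulae: finite conjunctions of pairwise distinct $k$-clauses (disjunctions of $k$ literals over distinct letters); $\mathcal{L}^k_{\mathtt{CNF}}(n,m)$ is the set of those with at most $n$ letters and $m$ clauses. $\Phi^{n,m}_{\mathtt{sat}}(\phi)=1$ if $\phi$ is satisfiable, $0$ otherwise. MILP graph $G_\phi$: with $(\vec{A}_\phi)_{ij}=1$ if $p_j\in C_i$, $-1$ if $\neg p_j\in C_i$, $0$ otherwise, and $b_i=1-$(number of negative literals in $C_i$), $G_\phi$ is the weighted bipartite graph with constraint nodes $v_1,\ldots,v_m$ (feature $b_i$), variable nodes $w_1,\ldots,w_n$ (empty feature), edge weights $E_{ij}=(\vec{A}_\phi)_{ij}$. GNN: $h^{1,V}_i=f^V_{\mathtt{in}}(x^V_i)$, $h^{1,W}_j=f^W_{\mathtt{in}}(x^W_j)\in\mathbb{R}^d$; for $1\le k<l$, $h^{k+1,V}_i=g^V_{k+1}(h^{k,V}_i,\sum_jE_{ij}f^W_{k+1}(h^{k,W}_j))$, $h^{k+1,W}_j=g^W_{k+1}(h^{k,W}_j,\sum_iE_{ij}f^V_{k+1}(h^{k,V}_i))$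 with learnable functions; output $\hat{y}_{G_\phi}=f_{\mathtt{out}}(\sum_ih^{l,V}_i,\sum_jh^{l,W}_j)\in\mathbb{R}$. A GNN with Random Node Initialisation (RNI) is such a GNN where each node's input feature is extended with an additional random value drawn independently and uniformly from $[0,1]$, so that the output is a random variable. $\mathcal{F}^{n,m}_{\mathtt{RNIGNN}}$ is the set of maps $F(\phi)=\hat{y}_{G_\phi}$ on $\mathcal{L}^k_{\mathtt{CNF}}(n,m)$ given by GNNs with RNI. $\mathbb{I}^{n,m}_{\mathtt{SAT}}(F,\phi)=1$ if $F(\phi)>\tfrac12$ and $0$ otherwise. *)

theory Defs
  imports "HOL-Analysis.Analysis" "HOL-Probability.Probability"
begin

text \<open>A literal is a pair (j, s): the letter p_j (j a natural number, letters
p_0, ..., p_(n-1) play the role of p_1, ..., p_n), positive if s = True and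
negated if s = False. A clause is a finite set of literals; a formula is a
list of clauses (the conjunction, constraint nodes v_1..v_m in list order).\<close>

type_synonym lit = "nat \<times> bool"
type_synonym clause = "lit set"
type_synonym formula = "clause list"

definition k_clause :: "nat \<Rightarrow> clause \<Rightarrow> bool" where
  "k_clause k C \<longleftrightarrow> finite C \<and> card C = k \<and> inj_on fst C"

definition kcnf :: "nat \<Rightarrow> nat \<Rightarrow> nat \<Rightarrow> formula set" where
  "kcnf k n m = {\<phi>. distinct \<phi> \<and> length \<phi> \<le> m \<and>
      (\<forall>C\<in>set \<phi>. k_clause k C \<and> (\<forall>l\<in>C. fst l < n))}"

definition satisfiable :: "formula \<Rightarrow> bool" where
  "satisfiable \<phi> \<longleftrightarrow> (\<exists>v :: nat \<Rightarrow> bool. \<forall>C\<in>set \<phi>. \<exists>l\<in>C. v (fst l) = snd l)"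

definition Phi_sat :: "formula \<Rightarrow> nat" where
  "Phi_sat \<phi> = (if satisfiable \<phi> then 1 else 0)"

definition edge_w :: "formula \<Rightarrow> nat \<Rightarrow> nat \<Rightarrow> real" where
  "edge_w \<phi> i j = (if (j, True) \<in> \<phi> ! i then 1 else if (j, False) \<in> \<phi> ! i then -1 else 0)"

definition b_feat :: "formula \<Rightarrow> nat \<Rightarrow> real" where
  "b_feat \<phi> i = 1 - real (card {l \<in> \<phi> ! i. snd l = False})"

text \<open>Hidden vectors in R^d are represented as functions nat => real vanishing
outside {..<d} (product topology = Euclidean topology on this subspace).\<close>

type_synonym vec = "nat \<Rightarrow> real"

definition vecs :: "nat \<Rightarrow> vec set" where
  "vecs d = {x. \<forall>c\<ge>d. x c = 0}"

record gnn =
  dim :: nat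
  layers :: nat
  fin_V :: "real \<times> real \<Rightarrow> vec"   \<comment> \<open>(b_i, random value)\<close>
  fin_W :: "real \<Rightarrow> vec"            \<comment> \<open>(empty feature, random value)\<close>
  fV :: "nat \<Rightarrow> vec \<Rightarrow> vec"
  fW :: "nat \<Rightarrow> vec \<Rightarrow> vec"
  gV :: "nat \<Rightarrow> vec \<times> vec \<Rightarrow> vec"
  gW :: "nat \<Rightarrow> vec \<times> vec \<Rightarrow> vec"
  fout :: "vec \<times> vec \<Rightarrow> real"

text \<open>Learnable functions are taken to be continuous maps between the
appropriate Euclidean spaces (as e.g. MLPs are).\<close>

definition valid_gnn :: "gnn \<Rightarrow> bool" where
  "valid_gnn N \<longleftrightarrow> (let d = dim N in
     layers N \<ge> 1 \<and>
     continuous_on UNIV (fin_V N) \<and> range (fin_V N) \<subseteq> vecs d \<and>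
     continuous_on UNIV (fin_W N) \<and> range (fin_W N) \<subseteq> vecs d \<and>
     (\<forall>k\<in>{2..layers N}.
        continuous_on (vecs d) (fV N k) \<and> fV N k ` vecs d \<subseteq> vecs d \<and>
        continuous_on (vecs d) (fW N k) \<and> fW N k ` vecs d \<subseteq> vecs d \<and>
        continuous_on (vecs d \<times> vecs d) (gV N k) \<and> gV N k ` (vecs d \<times> vecs d) \<subseteq> vecs d \<and>
        continuous_on (vecs d \<times> vecs d) (gW N k) \<and> gW N k ` (vecs d \<times> vecs d) \<subseteq> vecs d) \<and>
     continuous_on (vecs d \<times> vecs d) (fout N))"

text \<open>Node states: constraint node i is Inl i (i < length phi), variable node j
is Inr j (j < n). r gives the random value of each node. hidden N n phi r t is
the pair of (constraint states, variable states) at layer t+1.\<close>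

fun hidden :: "gnn \<Rightarrow> nat \<Rightarrow> formula \<Rightarrow> (nat + nat \<Rightarrow> real) \<Rightarrow> nat
                 \<Rightarrow> (nat \<Rightarrow> vec) \<times> (nat \<Rightarrow> vec)" where
  "hidden N n \<phi> r 0 =
     ((\<lambda>i. fin_V N (b_feat \<phi> i, r (Inl i))), (\<lambda>j. fin_W N (r (Inr j))))"
| "hidden N n \<phi> r (Suc t) =
     (let (hv, hw) = hidden N n \<phi> r t; k = Suc (Suc t) in
      ((\<lambda>i. gV N k (hv i, (\<lambda>c. \<Sum>j<n. edge_w \<phi> i j * fW N k (hw j) c))),
       (\<lambda>j. gW N k (hw j, (\<lambda>c. \<Sum>i<length \<phi>. edge_w \<phi> i j * fV N k (hv i) c)))))"

definition gnn_out :: "gnn \<Rightarrow> nat \<Rightarrow> formula \<Rightarrow> (nat + nat \<Rightarrow> real) \<Rightarrow> real" where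
  "gnn_out N n \<phi> r =
     (let (hv, hw) = hidden N n \<phi> r (layers N - 1) in
      fout N ((\<lambda>c. \<Sum>i<length \<phi>. hv i c), (\<lambda>c. \<Sum>j<n. hw j c)))"

definition I_SAT :: "gnn \<Rightarrow> nat \<Rightarrow> formula \<Rightarrow> (nat + nat \<Rightarrow> real) \<Rightarrow> nat" where
  "I_SAT N n \<phi> r = (if gnn_out N n \<phi> r > 1/2 then 1 else 0)"

definition nodes :: "nat \<Rightarrow> formula \<Rightarrow> (nat + nat) set" where
  "nodes n \<phi> = Inl ` {..<length \<phi>} \<union> Inr ` {..<n}"

definition rni_space :: "nat \<Rightarrow> formula \<Rightarrow> (nat + nat \<Rightarrow> real) measure" where
  "rni_space n \<phi> = PiM (nodes n \<phi>) (\<lambda>_. uniform_measure lborel {0..1::real})"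

definition err_prob :: "gnn \<Rightarrow> nat \<Rightarrow> formula \<Rightarrow> real" where
  "err_prob N n \<phi> = measure (rni_space n \<phi>)
      {r \<in> space (rni_space n \<phi>). I_SAT N n \<phi> r \<noteq> Phi_sat \<phi>}"

end

theory Submission
  imports Defs
begin


lemma clause_eq:
  fixes C :: clause and w :: "nat \<Rightarrow> bool"
  assumes kc: "k_clause k C" and lt: "\<forall>l\<in>C. fst l < n"
  shows "(1 - real (card {l\<in>C. snd l = False})) -
    (\<Sum>j<n. (if (j,True)\<in>C then 1 else if (j,False)\<in>C then -1 else 0) * (if w j then 1 else 0))
    = 1 - real (card {l\<in>C. w (fst l) = snd l})"
proof -
  have fin: "finite C" and inj: "inj_on fst C" using kc by (auto simp: k_clause_def)
  define g where "g j = (if (j,True)\<in>C then 1 else if (j,False)\<in>C then -1 else 0) * (if w j then 1 else (0::real))" for j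
  have sub: "fst ` C \<subseteq> {..<n}" using lt by auto
  have "(\<Sum>j<n. g j) = (\<Sum>j\<in>fst ` C. g j)"
    by (rule sum.mono_neutral_right) (use sub in \<open>auto simp: g_def image_iff\<close>, force+)
  also have "\<dots> = (\<Sum>l\<in>C. g (fst l))" by (rule sum.reindex[OF inj, unfolded comp_def])
  also have "\<dots> = (\<Sum>l\<in>C. (if snd l then 1 else -1) * (if w (fst l) then 1 else 0))"
  proof (rule sum.cong[OF refl])
    fix l assume l: "l \<in> C"
    obtain j s where ljs: "l = (j, s)" by (cases l)
    have "(j, \<not> s) \<notin> C" proof
    assume "(j, \<not> s) \<in> C"
    with inj l ljs have "(j, \<not> s) = (j, s)" by (metis fst_conv inj_onD)
    then show False by simp
  qed
    then show "g (fst l) = (if snd l then 1 else -1) * (if w (fst l) then 1 else 0)"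
      using l ljs by (cases s) (auto simp: g_def)
  qed
  finally have S: "(\<Sum>j<n. g j) = (\<Sum>l\<in>C. (if snd l then 1 else -1) * (if w (fst l) then 1 else 0))" .
  have c1: "real (card {l\<in>C. snd l = False}) = (\<Sum>l\<in>C. of_bool (snd l = False))"
    using fin by (simp add: Int_def conj_commute)
  have c2: "real (card {l\<in>C. w (fst l) = snd l}) = (\<Sum>l\<in>C. of_bool (w (fst l) = snd l))"
    using fin by (simp add: Int_def conj_commute)
  have "(\<Sum>l\<in>C. of_bool (snd l = False)) + (\<Sum>l\<in>C. (if snd l then 1 else -1) * (if w (fst l) then 1 else 0))
      = (\<Sum>l\<in>C. of_bool (w (fst l) = snd l) :: real)"
    by (subst sum.distrib[symmetric]) (rule sum.cong, auto)
  then show ?thesis using S c1 c2 unfolding g_def by linarith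
qed

definition clip :: "real \<Rightarrow> real" where "clip y = max 0 (min 1 y)"
definition stair :: "nat \<Rightarrow> real \<Rightarrow> real" where
  "stair M r = (\<Sum>c\<in>{1..<M}. clip (real (M*M) * r - (real (c*M) - 1)))"
definition hat :: "real \<Rightarrow> real" where "hat y = max 0 (1 - \<bar>y\<bar>)"
definition xval :: "nat set \<Rightarrow> nat \<Rightarrow> real \<Rightarrow> real" where
  "xval S M r = (\<Sum>a\<in>S. hat (stair M r - real a))"

definition mkN :: "(nat \<Rightarrow> nat set) \<Rightarrow> nat \<Rightarrow> nat \<Rightarrow> gnn" where
  "mkN e K M = \<lparr> dim = Suc K, layers = 2,
     fin_V = (\<lambda>p c. if c = K then fst p else 0),
     fin_W = (\<lambda>r c. if c < K then xval (e c) M r else 0),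
     fV = (\<lambda>k x. x), fW = (\<lambda>k x. x),
     gV = (\<lambda>k p c. if c < K then max 0 (fst p K - snd p c) else 0),
     gW = (\<lambda>k p c. 0),
     fout = (\<lambda>p. \<Sum>v<K. max 0 (1 - fst p v)) \<rparr>"

lemma cont_clip: "continuous_on S f \<Longrightarrow> continuous_on S (\<lambda>x. clip (f x))"
  unfolding clip_def by (intro continuous_intros)

lemma cont_hat: "continuous_on S f \<Longrightarrow> continuous_on S (\<lambda>x. hat (f x))"
  unfolding hat_def by (intro continuous_intros)

lemma cont_xval: "continuous_on UNIV (xval S M)"
  unfolding xval_def stair_def
  by (intro continuous_intros cont_hat cont_clip)

lemma cont_fstc: "continuous_on S (\<lambda>x::vec\<times>vec. fst x c)"
  by (rule continuous_on_subset[OF continuous_on_product_then_coordinatewise[OF continuous_on_fst[OF continuous_on_id[of UNIV]]]]) simp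

lemma cont_sndc: "continuous_on S (\<lambda>x::vec\<times>vec. snd x c)"
  by (rule continuous_on_subset[OF continuous_on_product_then_coordinatewise[OF continuous_on_snd[OF continuous_on_id[of UNIV]]]]) simp

lemma valid_mkN: "valid_gnn (mkN e K M)"
  unfolding valid_gnn_def mkN_def Let_def
  apply (simp add: vecs_def)
  apply (intro conjI)
  subgoal apply (intro continuous_on_coordinatewise_then_product)
    subgoal for i by (cases "i = K") (auto intro!: continuous_intros) done
  subgoal by auto
  subgoal apply (intro continuous_on_coordinatewise_then_product)
    subgoal for i by (cases "i < K") (auto intro!: continuous_intros cont_xval) done
  subgoal by auto
  subgoal apply (intro continuous_on_coordinatewise_then_product)
    subgoal for i by (cases "i < K") (auto intro!: continuous_intros cont_fstc cont_sndc) done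
  subgoal by auto
  subgoal by auto
  subgoal by (intro continuous_intros cont_fstc)
  done

lemma out_mkN: "gnn_out (mkN e K M) n \<phi> r =
  (\<Sum>v<K. max 0 (1 - (\<Sum>i<length \<phi>. max 0 (b_feat \<phi> i -
      (\<Sum>j<n. edge_w \<phi> i j * xval (e v) M (r (Inr j)))))))"
  by (simp add: gnn_out_def mkN_def)

lemma stair_val:
  assumes c: "c < M" and r1: "real c / real M \<le> r" and r2: "r \<le> real (Suc c) / real M - 1 / real (M*M)"
  shows "stair M r = real c"
proof -
  have M0: "real M > 0" using c by simp
  define y where "y = real (M*M) * r"
  have y1: "real (c*M) \<le> y"
  proof -
    have "real c \<le> r * real M" using r1 M0 by (simp add: field_simps)
    then have "real c * real M \<le> r * real M * real M" using M0 by (simp add: mult_right_mono)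
    then show ?thesis by (simp add: y_def algebra_simps)
  qed
  have y2: "y \<le> real (Suc c * M) - 1"
  proof -
    have "r * (real M * real M) \<le> (real (Suc c) / real M - 1 / real (M*M)) * (real M * real M)"
      using r2 M0 by (intro mult_right_mono) auto
    also have "\<dots> = real (Suc c) * real M - 1" using M0 by (simp add: field_simps)
    finally show ?thesis by (simp add: y_def algebra_simps)
  qed
  have "stair M r = (\<Sum>c'\<in>{1..<M}. if c' \<le> c then 1 else 0)"
    unfolding stair_def
  proof (rule sum.cong[OF refl])
    fix c' assume "c' \<in> {1..<M}"
    show "clip (real (M * M) * r - (real (c' * M) - 1)) = (if c' \<le> c then 1 else 0)"
    proof (cases "c' \<le> c")
      case True
      then have "real (c'*M) \<le> real (c*M)" by (simp add: mult_right_mono)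
      then show ?thesis using True y1 unfolding clip_def y_def by simp
    next
      case False
      then have "Suc c * M \<le> c'*M" by (intro mult_right_mono) auto
      then have "real (Suc c * M) \<le> real (c'*M)" by (simp only: of_nat_le_iff)
      then show ?thesis using False y2 unfolding clip_def y_def by simp
    qed
  qed
  also have "\<dots> = real (card ({1..<M} \<inter> {x. x \<le> c}))"
    by (simp add: sum.If_cases)
  also have "{1..<M} \<inter> {x. x \<le> c} = {1..c}" using c by auto
  finally show ?thesis by simp
qed

lemma xval_val:
  assumes "finite S" "stair M r = real b"
  shows "xval S M r = (if b \<in> S then 1 else 0)"
proof -
  have "xval S M r = (\<Sum>a\<in>S. if a = b then 1 else 0)"
    unfolding xval_def assms(2)
  proof (rule sum.cong[OF refl])
    fix a assume "a \<in> S"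
    show "hat (real b - real a) = (if a = b then 1 else 0)"
    proof (cases "a = b")
      case False
      then have "\<bar>real b - real a\<bar> \<ge> 1" by linarith
      then show ?thesis using False by (simp add: hat_def)
    qed (simp add: hat_def)
  qed
  also have "\<dots> = (if b \<in> S then 1 else 0)" using assms(1) by (simp add: sum.delta')
  finally show ?thesis .
qed

lemma correct:
  assumes phi: "\<phi> \<in> kcnf k n m" and e: "bij_betw e {..<K} (Pow {..<M})"
    and beta: "\<forall>j<n. \<beta> j < M \<and> stair M (r (Inr j)) = real (\<beta> j)" and inj: "inj_on \<beta> {..<n}"
  shows "I_SAT (mkN e K M) n \<phi> r = Phi_sat \<phi>"
proof -
  have cl: "k_clause k C \<and> (\<forall>l\<in>C. fst l < n)" if "C \<in> set \<phi>" for C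
    using phi that by (auto simp: kcnf_def)
  define sat where "sat v i \<longleftrightarrow> (\<exists>l\<in>\<phi>!i. (\<beta> (fst l) \<in> e v) = snd l)" for v i
  define U where "U v = (\<Sum>i<length \<phi>. if sat v i then 0 else 1 :: real)" for v
  have ev: "e v \<subseteq> {..<M}" if "v < K" for v using e that by (auto simp: bij_betw_def)
  have inner: "max 0 (b_feat \<phi> i - (\<Sum>j<n. edge_w \<phi> i j * xval (e v) M (r (Inr j))))
      = (if sat v i then 0 else 1)" if v: "v < K" and i: "i < length \<phi>" for v i
  proof -
    have fin: "finite (e v)" using ev[OF v] finite_subset by blast
    have C: "k_clause k (\<phi>!i) \<and> (\<forall>l\<in>\<phi>!i. fst l < n)" using cl[OF nth_mem[OF i]] by simp
    have "(\<Sum>j<n. edge_w \<phi> i j * xval (e v) M (r (Inr j)))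
        = (\<Sum>j<n. edge_w \<phi> i j * (if \<beta> j \<in> e v then 1 else 0))"
      using beta xval_val[OF fin] by (intro sum.cong) auto
    then have "b_feat \<phi> i - (\<Sum>j<n. edge_w \<phi> i j * xval (e v) M (r (Inr j)))
        = 1 - real (card {l\<in>\<phi>!i. (\<beta> (fst l) \<in> e v) = snd l})"
      using clause_eq[of k "\<phi>!i" n "\<lambda>j. \<beta> j \<in> e v"] C
      by (simp add: b_feat_def edge_w_def)
    moreover have "finite (\<phi>!i)" using C by (simp add: k_clause_def)
    then have "card {l\<in>\<phi>!i. (\<beta> (fst l) \<in> e v) = snd l} = 0 \<longleftrightarrow> \<not> sat v i"
      unfolding sat_def by (subst card_eq_0_iff) auto
    ultimately show ?thesis
      by (cases "sat v i") auto
  qed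
  have out: "gnn_out (mkN e K M) n \<phi> r = (\<Sum>v<K. max 0 (1 - U v))"
    unfolding out_mkN U_def by (intro sum.cong refl arg_cong2[where f=max] arg_cong2[where f=minus] sum.cong) (auto simp: inner)
  show ?thesis
  proof (cases "satisfiable \<phi>")
    case True
    then obtain w0 where w0: "\<forall>C\<in>set \<phi>. \<exists>l\<in>C. w0 (fst l) = snd l" by (auto simp: satisfiable_def)
    define S where "S = \<beta> ` {j. j < n \<and> w0 j}"
    have "S \<in> Pow {..<M}" using beta by (auto simp: S_def)
    then have "S \<in> e ` {..<K}" using e by (simp add: bij_betw_def)
    then obtain v where v: "v < K" "e v = S" by auto
    have memS: "\<beta> j \<in> S \<longleftrightarrow> w0 j" if "j < n" for j
      using inj that by (auto simp: S_def inj_on_def)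
    have "sat v i" if "i < length \<phi>" for i
    proof -
      have "\<phi>!i \<in> set \<phi>" using that by simp
      then obtain l where l: "l \<in> \<phi>!i" "w0 (fst l) = snd l" using w0 by blast
      have "fst l < n" using cl \<open>\<phi>!i \<in> set \<phi>\<close> l by blast
      then show ?thesis using l memS v by (auto simp: sat_def)
    qed
    then have "U v = 0" by (simp add: U_def)
    then have "1 \<le> (\<Sum>v<K. max 0 (1 - U v))"
      using member_le_sum[of v "{..<K}" "\<lambda>v. max 0 (1 - U v)"] v by auto
    then show ?thesis using True out by (simp add: I_SAT_def Phi_sat_def)
  next
    case False
    have "max 0 (1 - U v) = 0" if "v < K" for v
    proof -
      have "\<not> (\<forall>C\<in>set \<phi>. \<exists>l\<in>C. (\<beta> (fst l) \<in> e v) = snd l)"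
      proof
        assume H: "\<forall>C\<in>set \<phi>. \<exists>l\<in>C. (\<beta> (fst l) \<in> e v) = snd l"
        have "satisfiable \<phi>" unfolding satisfiable_def
          by (rule exI[where x="\<lambda>j. \<beta> j \<in> e v"]) (use H in simp)
        with False show False by simp
      qed
      then obtain C where C: "C \<in> set \<phi>" "\<not> (\<exists>l\<in>C. (\<beta> (fst l) \<in> e v) = snd l)" by blast
      then obtain i where i0: "i < length \<phi>" "\<phi>!i = C" by (metis in_set_conv_nth)
      then have i: "i < length \<phi>" "\<not> sat v i" using C unfolding sat_def by auto
      have "(if sat v i then 0 else 1::real) \<le> U v" unfolding U_def
        by (rule member_le_sum) (use i in auto)
      then have "1 \<le> U v" using i by simp
      then show ?thesis by simp
    qed
    then have "gnn_out (mkN e K M) n \<phi> r = 0" using out by simp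
    then show ?thesis using False by (simp add: I_SAT_def Phi_sat_def)
  qed
qed



abbreviation Unif :: "real measure" where "Unif \<equiv> uniform_measure lborel {0..1::real}"

lemma prob_U: "prob_space Unif"
  by (rule prob_space_uniform_measure) simp_all

lemma measU: "A \<in> sets borel \<Longrightarrow> measure Unif A = measure lborel ({0..1} \<inter> A)"
  by (subst measure_uniform_measure) simp_all

lemma meas_set1:
  assumes "a \<in> I" "A \<in> sets borel"
  shows "{r \<in> space (PiM I (\<lambda>_. Unif)). r a \<in> A} \<in> sets (PiM I (\<lambda>_. Unif))"
proof -
  have "(\<lambda>r. r a) \<in> measurable (PiM I (\<lambda>_. Unif)) Unif"
    by (rule measurable_component_singleton) (rule assms)
  from measurable_sets[OF this, of A] assms
  have "(\<lambda>r. r a) -` A \<inter> space (PiM I (\<lambda>_. Unif)) \<in> sets (PiM I (\<lambda>_. Unif))" by simp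
  moreover have "(\<lambda>r. r a) -` A \<inter> space (PiM I (\<lambda>_. Unif)) = {r \<in> space (PiM I (\<lambda>_. Unif)). r a \<in> A}" by auto
  ultimately show ?thesis by simp
qed

lemma meas1:
  assumes "a \<in> I" "A \<in> sets borel"
  shows "measure (PiM I (\<lambda>_. Unif)) {r \<in> space (PiM I (\<lambda>_. Unif)). r a \<in> A} = measure Unif A"
proof -
  have eq: "{r \<in> space (PiM I (\<lambda>_. Unif)). r a \<in> A} = prod_emb I (\<lambda>_. Unif) {a} (PiE {a} (\<lambda>_. A))"
    by (auto simp: prod_emb_def space_PiM restrict_PiE_iff)
  have "emeasure (PiM I (\<lambda>_. Unif)) (prod_emb I (\<lambda>_. Unif) {a} (PiE {a} (\<lambda>_. A))) = (\<Prod>i\<in>{a}. emeasure Unif A)"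
    by (rule emeasure_PiM_emb) (use assms prob_U in auto)
  then show ?thesis unfolding eq measure_def by simp
qed

lemma meas2:
  assumes "a \<in> I" "b \<in> I" "a \<noteq> b" "A \<in> sets borel" "B \<in> sets borel"
  shows "measure (PiM I (\<lambda>_. Unif)) {r \<in> space (PiM I (\<lambda>_. Unif)). r a \<in> A \<and> r b \<in> B}
     = measure Unif A * measure Unif B"
proof -
  have eq: "{r \<in> space (PiM I (\<lambda>_. Unif)). r a \<in> A \<and> r b \<in> B}
     = prod_emb I (\<lambda>_. Unif) {a, b} (PiE {a, b} (\<lambda>i. if i = a then A else B))"
    using assms(3) by (auto simp: prod_emb_def space_PiM restrict_PiE_iff)
  have "emeasure (PiM I (\<lambda>_. Unif)) (prod_emb I (\<lambda>_. Unif) {a, b} (PiE {a, b} (\<lambda>i. if i = a then A else B)))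
      = (\<Prod>i\<in>{a, b}. emeasure Unif (if i = a then A else B))"
    by (rule emeasure_PiM_emb) (use assms prob_U in auto)
  also have "\<dots> = emeasure Unif A * emeasure Unif B" using assms(3) by simp
  also have "\<dots> = ennreal (measure Unif A * measure Unif B)"
    using finite_measure.emeasure_eq_measure[OF prob_space.finite_measure[OF prob_U]] by (simp add: ennreal_mult)
  finally show ?thesis unfolding eq measure_def by simp
qed

lemma cover:
  fixes x :: real
  assumes M: "M \<ge> 1" and x: "0 \<le> x" "x \<le> 1"
    and ng: "\<forall>c<M. x \<notin> {real (Suc c) / real M - 1 / real (M*M) <.. real (Suc c) / real M}"
  shows "\<exists>c<M. real c / real M \<le> x \<and> x \<le> real (Suc c) / real M - 1 / real (M*M)"
proof -
  have M0: "real M > 0" using M by simp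
  define c where "c = nat \<lfloor>x * real M\<rfloor>"
  have fl: "real c \<le> x * real M" "x * real M < real c + 1"
    using x M0 unfolding c_def by (simp_all add: of_nat_nat)
  show ?thesis
  proof (cases "c < M")
    case True
    have "real c / real M \<le> x" using fl M0 by (simp add: field_simps)
    moreover have "x < real (Suc c) / real M" using fl M0 by (simp add: field_simps)
    moreover have "\<not> (x > real (Suc c) / real M - 1 / real (M*M))"
      using ng True \<open>x < real (Suc c) / real M\<close> by auto
    ultimately show ?thesis using True by (intro exI[of _ c]) auto
  next
    case False
    then have "real M \<le> x * real M" using fl by linarith
    then have x1: "x = 1" using x M0 by (simp add: mult_le_cancel_right2)
    have "M - 1 < M" using M by simp
    have e1: "real (Suc (M - 1)) / real M = 1" using M by (simp add: of_nat_diff)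
    have "1 / real (M*M) > 0" using M0 by simp
    then have "x \<in> {real (Suc (M-1)) / real M - 1 / real (M*M) <.. real (Suc (M-1)) / real M}"
      unfolding e1 x1 by simp
    then show ?thesis using ng \<open>M - 1 < M\<close> by blast
  qed
qed



lemma fm_P: "finite_measure (PiM I (\<lambda>_. Unif))"
  using prob_space_PiM[of I "\<lambda>_. Unif"] prob_U by (simp add: prob_space.finite_measure)

lemma bad_set:
  fixes n M :: nat and \<phi> :: formula
  assumes M: "M \<ge> 1"
  obtains X where "X \<in> sets (rni_space n \<phi>)"
    "measure (rni_space n \<phi>) X \<le> (real n + real n * real n) / real M"
    "\<And>r. r \<in> space (rni_space n \<phi>) \<Longrightarrow> r \<notin> X \<Longrightarrow>
       \<exists>\<beta>. (\<forall>j<n. \<beta> j < M \<and> stair M (r (Inr j)) = real (\<beta> j)) \<and> inj_on \<beta> {..<n}"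
proof -
  define I where "I = nodes n \<phi>"
  define P where "P = PiM I (\<lambda>_. Unif)"
  have PP: "rni_space n \<phi> = P" by (simp add: rni_space_def P_def I_def)
  have inI: "Inr j \<in> I" if "j < n" for j using that by (simp add: I_def nodes_def)
  have M0: "real M > 0" using M by simp
  define gap where "gap c = {real (Suc c) / real M - 1 / real (M*M) <.. real (Suc c) / real M}" for c
  define Bc where "Bc c = {real c / real M .. real (Suc c) / real M}" for c
  define E0 where "E0 j = {r \<in> space P. r (Inr j) \<in> - {0..1}}" for j
  define E1 where "E1 p = {r \<in> space P. r (Inr (fst p)) \<in> gap (snd p)}" for p
  define E2 where "E2 q = (case q of (j, j', c) \<Rightarrow> if j = j' then {} else
       {r \<in> space P. r (Inr j) \<in> Bc c \<and> r (Inr j') \<in> Bc c})" for q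
  define X where "X = (\<Union>j\<in>{..<n}. E0 j) \<union> (\<Union>p\<in>{..<n}\<times>{..<M}. E1 p) \<union> (\<Union>q\<in>{..<n}\<times>{..<n}\<times>{..<M}. E2 q)"
  interpret fm: finite_measure P unfolding P_def by (rule fm_P)
  have s0: "E0 j \<in> sets P" if "j < n" for j
    unfolding E0_def P_def by (rule meas_set1) (use inI that in auto)
  have s1: "E1 p \<in> sets P" if "p \<in> {..<n}\<times>{..<M}" for p
    unfolding E1_def P_def by (rule meas_set1) (use inI that in \<open>auto simp: gap_def\<close>)
  have s2: "E2 q \<in> sets P" if "q \<in> {..<n}\<times>{..<n}\<times>{..<M}" for q
  proof -
    obtain j j' c where q: "q = (j, j', c)" by (cases q) auto
    have "{r \<in> space P. r (Inr j) \<in> Bc c \<and> r (Inr j') \<in> Bc c}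
        = {r \<in> space P. r (Inr j) \<in> Bc c} \<inter> {r \<in> space P. r (Inr j') \<in> Bc c}" by auto
    moreover have "{r \<in> space P. r (Inr j) \<in> Bc c} \<in> sets P" "{r \<in> space P. r (Inr j') \<in> Bc c} \<in> sets P"
      unfolding P_def by (rule meas_set1, use inI that q in \<open>auto simp: Bc_def\<close>)+
    ultimately show ?thesis unfolding E2_def q by auto
  qed
  have sX: "X \<in> sets P" unfolding X_def using s0 s1 s2 by (intro sets.Un sets.finite_UN) auto
  have m0: "measure P (E0 j) = 0" if "j < n" for j
  proof -
    have "measure P (E0 j) = measure Unif (- {0..1})"
      unfolding E0_def P_def by (rule meas1) (use inI that in auto)
    also have "\<dots> = 0" by (subst measU) auto
    finally show ?thesis .
  qed
  have m1: "measure P (E1 p) = 1 / real (M*M)" if "p \<in> {..<n}\<times>{..<M}" for p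
  proof -
    obtain j c where p: "p = (j, c)" by (cases p)
    have c: "c < M" using that p by auto
    have "measure P (E1 p) = measure Unif (gap c)"
      unfolding E1_def P_def p by (simp, rule meas1) (use inI that p in \<open>auto simp: gap_def\<close>)
    also have "\<dots> = measure lborel ({0..1} \<inter> gap c)" by (rule measU) (simp add: gap_def)
    also have "{0..1} \<inter> gap c = gap c"
    proof -
      have a: "1 / real M \<le> 1" using M by simp
      have "1 / real (M*M) = (1 / real M) * (1 / real M)" by simp
      also have "\<dots> \<le> 1 / real M" using a by (intro mult_left_le) auto
      also have "\<dots> \<le> real (Suc c) / real M" by (intro divide_right_mono) auto
      finally have "1 / real (M*M) \<le> real (Suc c) / real M" .
      moreover have "real (Suc c) / real M \<le> 1" using c M0 by (simp add: field_simps)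
      ultimately show ?thesis by (auto simp: gap_def)
    qed
    also have "measure lborel (gap c) = 1 / real (M*M)"
      unfolding gap_def by (subst measure_lborel_Ioc) auto
    finally show ?thesis .
  qed
  have m2: "measure P (E2 q) \<le> 1 / real (M*M)" if "q \<in> {..<n}\<times>{..<n}\<times>{..<M}" for q
  proof -
    obtain j j' c where q: "q = (j, j', c)" by (cases q) auto
    have c: "c < M" "j < n" "j' < n" using that q by auto
    have mB: "measure Unif (Bc c) = 1 / real M"
    proof -
      have "measure Unif (Bc c) = measure lborel ({0..1} \<inter> Bc c)" by (rule measU) (simp add: Bc_def)
      also have "{0..1} \<inter> Bc c = Bc c"
      proof -
        have "real (Suc c) / real M \<le> 1" using c M0 by (simp add: field_simps)
        then show ?thesis by (auto simp: Bc_def)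
      qed
      also have "measure lborel (Bc c) = 1 / real M"
        unfolding Bc_def using M0 by (subst measure_lborel_Icc) (auto simp: field_simps)
      finally show ?thesis .
    qed
    show ?thesis
    proof (cases "j = j'")
      case True then show ?thesis unfolding E2_def q by simp
    next
      case False
      have "measure P (E2 q) = measure Unif (Bc c) * measure Unif (Bc c)"
        unfolding E2_def q P_def using False by (simp, intro meas2) (use inI c in \<open>auto simp: Bc_def\<close>)
      then show ?thesis using mB by simp
    qed
  qed
  have "measure P X \<le> measure P (\<Union>j\<in>{..<n}. E0 j) + measure P (\<Union>p\<in>{..<n}\<times>{..<M}. E1 p)
      + measure P (\<Union>q\<in>{..<n}\<times>{..<n}\<times>{..<M}. E2 q)"
  proof -
    let ?A = "\<Union>j\<in>{..<n}. E0 j" and ?B = "\<Union>p\<in>{..<n}\<times>{..<M}. E1 p"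
      and ?C = "\<Union>q\<in>{..<n}\<times>{..<n}\<times>{..<M}. E2 q"
    have A: "?A \<in> sets P" using s0 by (intro sets.finite_UN) auto
    have B: "?B \<in> sets P" using s1 by (intro sets.finite_UN) auto
    have C: "?C \<in> sets P" using s2 by (intro sets.finite_UN) auto
    have "measure P X \<le> measure P (?A \<union> ?B) + measure P ?C"
      unfolding X_def using A B C by (intro measure_Un_le sets.Un)
    also have "\<dots> \<le> measure P ?A + measure P ?B + measure P ?C"
      using A B by (intro add_mono measure_Un_le order_refl)
    finally show ?thesis .
  qed
  also have "\<dots> \<le> (\<Sum>j\<in>{..<n}. measure P (E0 j)) + (\<Sum>p\<in>{..<n}\<times>{..<M}. measure P (E1 p))
      + (\<Sum>q\<in>{..<n}\<times>{..<n}\<times>{..<M}. measure P (E2 q))"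
    using s0 s1 s2 by (intro add_mono fm.finite_measure_subadditive_finite) auto
  also have "\<dots> \<le> 0 + real (card ({..<n}\<times>{..<M})) * (1 / real (M*M))
      + real (card ({..<n}\<times>{..<n}\<times>{..<M})) * (1 / real (M*M))"
    using m0 m1 m2 by (intro add_mono sum_bounded_above) auto
  also have "\<dots> = (real n + real n * real n) / real M"
    using M0 by (simp add: card_cartesian_product field_simps)
  finally have mX: "measure P X \<le> (real n + real n * real n) / real M" .
  have good: "\<exists>\<beta>. (\<forall>j<n. \<beta> j < M \<and> stair M (r (Inr j)) = real (\<beta> j)) \<and> inj_on \<beta> {..<n}"
    if r: "r \<in> space P" "r \<notin> X" for r
  proof -
    define G where "G j c \<longleftrightarrow> c < M \<and> real c / real M \<le> r (Inr j) \<and>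
        r (Inr j) \<le> real (Suc c) / real M - 1 / real (M*M)" for j c
    have exG: "\<exists>c. G j c" if j: "j < n" for j
    proof -
      have "r \<notin> E0 j" using r j unfolding X_def by auto
      then have x: "0 \<le> r (Inr j)" "r (Inr j) \<le> 1" using r by (auto simp: E0_def)
      have "\<forall>c<M. r (Inr j) \<notin> gap c"
      proof (intro allI impI)
        fix c assume "c < M"
        then have "r \<notin> E1 (j, c)" using r j unfolding X_def by blast
        then show "r (Inr j) \<notin> gap c" using r by (auto simp: E1_def)
      qed
      from cover[OF M x this[unfolded gap_def]] show ?thesis by (auto simp: G_def)
    qed
    define \<beta> where "\<beta> j = (SOME c. G j c)" for j
    have Gb: "G j (\<beta> j)" if "j < n" for j using exG[OF that] unfolding \<beta>_def by (rule someI_ex)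
    have st: "\<beta> j < M \<and> stair M (r (Inr j)) = real (\<beta> j)" if "j < n" for j
      using Gb[OF that] stair_val unfolding G_def by blast
    have "inj_on \<beta> {..<n}"
    proof (rule inj_onI, rule ccontr)
      fix j j' assume j: "j \<in> {..<n}" "j' \<in> {..<n}" "\<beta> j = \<beta> j'" "j \<noteq> j'"
      define c where "c = \<beta> j"
      have g1: "G j (\<beta> j)" using Gb j(1) by blast
      have g2: "G j' (\<beta> j')" using Gb j(2) by blast
      have "G j c" using g1 unfolding c_def .
      moreover have "G j' c" using g2 j(3) unfolding c_def by simp
      ultimately have "r (Inr j) \<in> Bc c" "r (Inr j') \<in> Bc c" "c < M"
      proof -
        have z: "0 \<le> 1 / (real M * real M)" by simp
        show "r (Inr j) \<in> Bc c"
          using \<open>G j c\<close> unfolding G_def Bc_def by (auto; use z in linarith)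
        show "r (Inr j') \<in> Bc c"
          using \<open>G j' c\<close> unfolding G_def Bc_def by (auto; use z in linarith)
        show "c < M" using \<open>G j c\<close> unfolding G_def by simp
      qed
      then have "r \<in> E2 (j, j', c)" using j r unfolding E2_def by auto
      then have "r \<in> X" using j \<open>c < M\<close> unfolding X_def by blast
      then show False using r by simp
    qed
    then show ?thesis using st by blast
  qed
  show ?thesis using that[of X] sX mX good unfolding PP by blast
qed



theorem proposition7:
  fixes k n m :: nat and D :: "formula set" and \<epsilon> :: real
  assumes "finite D" and "D \<subseteq> kcnf k n m" and "\<epsilon> > 0"
  shows "\<exists>N. valid_gnn N \<and> (\<forall>\<phi>\<in>D. err_prob N n \<phi> < \<epsilon>)"
proof -
  obtain M0 :: nat where M0: "(real n + real n * real n) / \<epsilon> < real M0"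
    using reals_Archimedean2 by blast
  define M where "M = Suc M0"
  have M1: "M \<ge> 1" by (simp add: M_def)
  have Mpos: "real M > 0" by (simp add: M_def)
  have bnd: "(real n + real n * real n) / real M < \<epsilon>"
  proof -
    have "real n + real n * real n < \<epsilon> * real M0" using M0 assms(3) by (simp add: field_simps)
    also have "\<dots> \<le> \<epsilon> * real M" using assms(3) by (simp add: M_def)
    finally show ?thesis using Mpos by (simp add: field_simps)
  qed
  define K where "K = card (Pow {..<M})"
  obtain e where e0: "bij_betw e {0..<K} (Pow {..<M})"
    using ex_bij_betw_nat_finite[of "Pow {..<M}"] unfolding K_def by auto
  have e: "bij_betw e {..<K} (Pow {..<M})" using e0 by (simp add: atLeast0LessThan)
  define N where "N = mkN e K M"
  have "err_prob N n \<phi> < \<epsilon>" if phi: "\<phi> \<in> D" for \<phi>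
  proof -
    have phik: "\<phi> \<in> kcnf k n m" using phi assms(2) by blast
    obtain X where X: "X \<in> sets (rni_space n \<phi>)"
      "measure (rni_space n \<phi>) X \<le> (real n + real n * real n) / real M"
      "\<And>r. r \<in> space (rni_space n \<phi>) \<Longrightarrow> r \<notin> X \<Longrightarrow>
         \<exists>\<beta>. (\<forall>j<n. \<beta> j < M \<and> stair M (r (Inr j)) = real (\<beta> j)) \<and> inj_on \<beta> {..<n}"
      using bad_set[OF M1] by blast
    have sub: "{r \<in> space (rni_space n \<phi>). I_SAT N n \<phi> r \<noteq> Phi_sat \<phi>} \<subseteq> X"
    proof
      fix r assume r: "r \<in> {r \<in> space (rni_space n \<phi>). I_SAT N n \<phi> r \<noteq> Phi_sat \<phi>}"
      show "r \<in> X"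
      proof (rule ccontr)
        assume "r \<notin> X"
        then obtain \<beta> where "\<forall>j<n. \<beta> j < M \<and> stair M (r (Inr j)) = real (\<beta> j)" "inj_on \<beta> {..<n}"
          using X(3) r by blast
        then have "I_SAT N n \<phi> r = Phi_sat \<phi>" unfolding N_def by (intro correct[OF phik e])
        then show False using r by simp
      qed
    qed
    interpret fm: finite_measure "rni_space n \<phi>" unfolding rni_space_def by (rule fm_P)
    have "err_prob N n \<phi> \<le> measure (rni_space n \<phi>) X"
      unfolding err_prob_def by (rule fm.finite_measure_mono[OF sub X(1)])
    then show ?thesis using X(2) bnd by linarith
  qed
  moreover have "valid_gnn N" unfolding N_def by (rule valid_mkN)
  ultimately show ?thesis by blast
qed

end
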